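(* In the setting below, the image of $\rho\colon G\to A$ is a normal subgroup of $A$.
   Context: Let $G$ be a group generated by $a_1,\dots,a_n$ with $z=a_1\cdots a_n$ central. Let $S_1,\dots,S_m\subseteq\{1,\dots,n\}$ with $|S_i\cap S_r|\le1$ for $i\neq r$. For $S\subseteq\{1,\dots,n\}$ let $G_S$ be the quotient of $G$ by the normal closure of $\{a_j: j\notin S\}$; let $a_{ij}$ be the image of $a_j$ in $G_{S_i}$ (so $a_{ij}=1$ if $j\notin S_i$) and $z_i=a_{i1}\cdots a_{in}$, which is central in $G_{S_i}$. Let $\bar G=G/\langle z\rangle$, $\bar G_{S_i}=G_{S_i}/\langle z_i\rangle$, and assume each $\bar G_{S_i}$ is free of rank $|S_i|-1$, the images of any $|S_i|-1$ of the $a_{ij}$, $j\in S_i$, forming a free basis. Let $A=\prod_{i=1}^mG_{S_i}$, $\bar A=\prod_{i=1}^m\bar G_{S_i}$, $\rho\colon G\to A$ the product of the projections, and $\bar\rho\colon\bar G\to\bar A$ the induced homomorphism. *)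

theory Defs
  imports "HOL-Algebra.Algebra"
begin

definition normal_closure :: "('g, 'b) monoid_scheme \<Rightarrow> 'g set \<Rightarrow> 'g set" where
  "normal_closure G Y = generate G ((\<lambda>(g, x). g \<otimes>\<^bsub>G\<^esub> x \<otimes>\<^bsub>G\<^esub> inv\<^bsub>G\<^esub> g) ` (carrier G \<times> Y))"

definition gprod :: "('g, 'b) monoid_scheme \<Rightarrow> (nat \<Rightarrow> 'g) \<Rightarrow> nat \<Rightarrow> 'g" where
  "gprod G x n = foldr (\<lambda>j acc. x j \<otimes>\<^bsub>G\<^esub> acc) [1..<Suc n] \<one>\<^bsub>G\<^esub>"

definition eval_word :: "('g, 'b) monoid_scheme \<Rightarrow> ('i \<Rightarrow> 'g) \<Rightarrow> ('i \<times> bool) list \<Rightarrow> 'g" where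
  "eval_word H x w = foldr (\<lambda>(i,e) acc. (if e then x i else inv\<^bsub>H\<^esub> (x i)) \<otimes>\<^bsub>H\<^esub> acc) w \<one>\<^bsub>H\<^esub>"

fun reduced_word :: "('i \<times> bool) list \<Rightarrow> bool" where
  "reduced_word ((i,e) # (j,f) # w) = (\<not> (i = j \<and> e \<noteq> f) \<and> reduced_word ((j,f) # w))"
| "reduced_word _ = True"

definition free_basis :: "('g, 'b) monoid_scheme \<Rightarrow> ('i \<Rightarrow> 'g) \<Rightarrow> 'i set \<Rightarrow> bool" where
  "free_basis H x I \<longleftrightarrow> x ` I \<subseteq> carrier H \<and> generate H (x ` I) = carrier H \<and>
     (\<forall>w. w \<noteq> [] \<and> set (map fst w) \<subseteq> I \<and> reduced_word w \<longrightarrow> eval_word H x w \<noteq> \<one>\<^bsub>H\<^esub>)"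

definition kerS :: "('g, 'b) monoid_scheme \<Rightarrow> (nat \<Rightarrow> 'g) \<Rightarrow> nat \<Rightarrow> nat set \<Rightarrow> 'g set" where
  "kerS G a n S = normal_closure G (a ` ({1..n} - S))"

definition GS :: "('g, 'b) monoid_scheme \<Rightarrow> (nat \<Rightarrow> 'g) \<Rightarrow> nat \<Rightarrow> nat set \<Rightarrow> 'g set monoid" where
  "GS G a n S = G Mod kerS G a n S"

definition aS :: "('g, 'b) monoid_scheme \<Rightarrow> (nat \<Rightarrow> 'g) \<Rightarrow> nat \<Rightarrow> nat set \<Rightarrow> nat \<Rightarrow> 'g set" where
  "aS G a n S j = kerS G a n S #>\<^bsub>G\<^esub> a j"

definition zS :: "('g, 'b) monoid_scheme \<Rightarrow> (nat \<Rightarrow> 'g) \<Rightarrow> nat \<Rightarrow> nat set \<Rightarrow> 'g set" where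
  "zS G a n S = gprod (GS G a n S) (aS G a n S) n"

definition barGS :: "('g, 'b) monoid_scheme \<Rightarrow> (nat \<Rightarrow> 'g) \<Rightarrow> nat \<Rightarrow> nat set \<Rightarrow> 'g set set monoid" where
  "barGS G a n S = GS G a n S Mod generate (GS G a n S) {zS G a n S}"

definition bar_aS :: "('g, 'b) monoid_scheme \<Rightarrow> (nat \<Rightarrow> 'g) \<Rightarrow> nat \<Rightarrow> nat set \<Rightarrow> nat \<Rightarrow> 'g set set" where
  "bar_aS G a n S j = generate (GS G a n S) {zS G a n S} #>\<^bsub>GS G a n S\<^esub> aS G a n S j"

end

theory Submission
  imports Defs
begin


context group begin

lemma cancel1 [simp]: "x \<in> carrier G \<Longrightarrow> y \<in> carrier G \<Longrightarrow> inv x \<otimes> (x \<otimes> y) = y"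
  by (simp add: m_assoc[symmetric])
lemma cancel2 [simp]: "x \<in> carrier G \<Longrightarrow> y \<in> carrier G \<Longrightarrow> x \<otimes> (inv x \<otimes> y) = y"
  by (simp add: m_assoc[symmetric])

lemma comm_inv_id:
  assumes "u \<in> carrier G" "h \<in> carrier G"
  shows "u \<otimes> inv h \<otimes> inv u \<otimes> inv (inv h) = inv h \<otimes> inv (u \<otimes> h \<otimes> inv u \<otimes> inv h) \<otimes> inv (inv h)"
proof -
  have "inv h \<otimes> inv (u \<otimes> h \<otimes> inv u \<otimes> inv h) \<otimes> inv (inv h) = (inv h \<otimes> h) \<otimes> (u \<otimes> inv h \<otimes> inv u \<otimes> h)"
    using assms by (simp add: inv_mult_group m_assoc)
  then show ?thesis using assms by (simp add: m_assoc)
qed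

lemma comm_mult_id:
  assumes "u \<in> carrier G" "a \<in> carrier G" "b \<in> carrier G"
  shows "u \<otimes> (a \<otimes> b) \<otimes> inv u \<otimes> inv (a \<otimes> b) =
     (u \<otimes> a \<otimes> inv u \<otimes> inv a) \<otimes> (a \<otimes> (u \<otimes> b \<otimes> inv u \<otimes> inv b) \<otimes> inv a)"
  using assms by (simp add: inv_mult_group m_assoc)

lemma comm_swap:
  assumes "u \<in> carrier G" "v \<in> carrier G"
  shows "v \<otimes> u \<otimes> inv v \<otimes> inv u = inv (u \<otimes> v \<otimes> inv u \<otimes> inv v)"
  using assms by (simp add: inv_mult_group m_assoc)

lemma conj_as_comm:
  assumes "x \<in> carrier G" "y \<in> carrier G"
  shows "x \<otimes> y \<otimes> inv x = (x \<otimes> y \<otimes> inv x \<otimes> inv y) \<otimes> y"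
  using assms by (simp add: m_assoc)

lemma comm_B1:
  assumes C: "subgroup C G" and cc: "\<And>g c. g \<in> carrier G \<Longrightarrow> c \<in> C \<Longrightarrow> g \<otimes> c \<otimes> inv g \<in> C"
    and XX: "XX \<subseteq> carrier G" and u: "u \<in> carrier G"
    and base: "\<And>x. x \<in> XX \<Longrightarrow> u \<otimes> x \<otimes> inv u \<otimes> inv x \<in> C"
    and v: "v \<in> generate G XX"
  shows "u \<otimes> v \<otimes> inv u \<otimes> inv v \<in> C"
  using v
proof (induct v rule: generate.induct)
  case one
  then show ?case using u by (simp add: subgroup.one_closed[OF C])
next
  case (incl h) then show ?case using base by blast
next
  case (inv h)
  have h: "h \<in> carrier G" using inv XX by blast
  have "inv (u \<otimes> h \<otimes> inv u \<otimes> inv h) \<in> C"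
    using base[OF inv] subgroup.m_inv_closed[OF C] by blast
  then have "inv h \<otimes> inv (u \<otimes> h \<otimes> inv u \<otimes> inv h) \<otimes> inv (inv h) \<in> C"
    using cc h by blast
  then show ?case using comm_inv_id[OF u h] by simp
next
  case (eng h1 h2)
  have c1: "h1 \<in> carrier G" "h2 \<in> carrier G" using eng generate_in_carrier[OF XX] by auto
  have "(u \<otimes> h1 \<otimes> inv u \<otimes> inv h1) \<otimes> (h1 \<otimes> (u \<otimes> h2 \<otimes> inv u \<otimes> inv h2) \<otimes> inv h1) \<in> C"
    using eng cc c1 subgroup.m_closed[OF C] by blast
  then show ?case using comm_mult_id[OF u c1] by simp
qed

lemma comm_B:
  assumes C: "subgroup C G" and cc: "\<And>g c. g \<in> carrier G \<Longrightarrow> c \<in> C \<Longrightarrow> g \<otimes> c \<otimes> inv g \<in> C"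
    and XX: "XX \<subseteq> carrier G" and gen: "generate G XX = carrier G"
    and base: "\<And>x y. x \<in> XX \<Longrightarrow> y \<in> XX \<Longrightarrow> x \<otimes> y \<otimes> inv x \<otimes> inv y \<in> C"
    and u: "u \<in> carrier G" and v: "v \<in> carrier G"
  shows "u \<otimes> v \<otimes> inv u \<otimes> inv v \<in> C"
proof -
  have s1: "x \<otimes> w \<otimes> inv x \<otimes> inv w \<in> C" if "x \<in> XX" "w \<in> carrier G" for x w
    using comm_B1[OF C cc XX _ base[OF that(1)]] that XX gen by blast
  have "u \<otimes> x \<otimes> inv u \<otimes> inv x \<in> C" if "x \<in> XX" for x
  proof -
    have "inv (x \<otimes> u \<otimes> inv x \<otimes> inv u) \<in> C" using s1[OF that u] subgroup.m_inv_closed[OF C] by blast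
    then show ?thesis using comm_swap[of x u] that XX u by auto
  qed
  then show ?thesis using comm_B1[OF C cc XX u] v gen by blast
qed

end


lemma prod_subgroup_lemma:
  assumes grps: "\<And>i. i \<in> I \<Longrightarrow> group (Q i)" and fin: "finite I"
    and Hs: "subgroup H (product_group I Q)"
    and c: "c \<in> (\<Pi>\<^sub>E i\<in>I. carrier (Q i))"
    and e: "\<And>i. i \<in> I \<Longrightarrow> (\<lambda>r\<in>I. if r = i then c i else \<one>\<^bsub>Q r\<^esub>) \<in> H"
  shows "c \<in> H"
proof -
  have "J \<subseteq> I \<Longrightarrow> (\<lambda>r\<in>I. if r \<in> J then c r else \<one>\<^bsub>Q r\<^esub>) \<in> H" for J
  proof -
    assume JI: "J \<subseteq> I"
    then have "finite J" using fin finite_subset by blast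
    then show ?thesis using JI
    proof (induct J rule: finite_induct)
      case empty
      have "(\<lambda>r\<in>I. if r \<in> {} then c r else \<one>\<^bsub>Q r\<^esub>) = \<one>\<^bsub>product_group I Q\<^esub>" by simp
      then show ?case using subgroup.one_closed[OF Hs] by (simp add: restrict_def)
    next
      case (insert j J)
      have eq: "(\<lambda>r\<in>I. if r \<in> insert j J then c r else \<one>\<^bsub>Q r\<^esub>) =
          (\<lambda>r\<in>I. if r \<in> J then c r else \<one>\<^bsub>Q r\<^esub>) \<otimes>\<^bsub>product_group I Q\<^esub> (\<lambda>r\<in>I. if r = j then c j else \<one>\<^bsub>Q r\<^esub>)"
      proof (rule ext)
        fix r
        show "(\<lambda>r\<in>I. if r \<in> insert j J then c r else \<one>\<^bsub>Q r\<^esub>) r =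
          ((\<lambda>r\<in>I. if r \<in> J then c r else \<one>\<^bsub>Q r\<^esub>) \<otimes>\<^bsub>product_group I Q\<^esub> (\<lambda>r\<in>I. if r = j then c j else \<one>\<^bsub>Q r\<^esub>)) r"
        proof (cases "r \<in> I")
          case True
          have cr: "c r \<in> carrier (Q r)" using c True by auto
          interpret Qr: group "Q r" using grps True .
          show ?thesis using True cr insert(2) by (cases "r = j") (simp_all add: monoid.l_one[OF group.is_monoid[OF grps]] monoid.r_one[OF group.is_monoid[OF grps]])
        qed simp
      qed
      show ?case unfolding eq
        by (rule subgroup.m_closed[OF Hs]) (use insert e in \<open>auto simp: restrict_def\<close>)
    qed
  qed
  from this[of I] have "(\<lambda>r\<in>I. if r \<in> I then c r else \<one>\<^bsub>Q r\<^esub>) \<in> H" by simp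
  moreover have "(\<lambda>r\<in>I. if r \<in> I then c r else \<one>\<^bsub>Q r\<^esub>) = c"
    using c by (auto simp: PiE_iff extensional_def)
  ultimately show ?thesis by simp
qed


theorem mainTheorem11:
  fixes G :: "('g, 'b) monoid_scheme" and a :: "nat \<Rightarrow> 'g" and n m :: nat
    and S :: "nat \<Rightarrow> nat set"
  assumes grp: "group G"
    and a_carr: "a ` {1..n} \<subseteq> carrier G"
    and gen: "generate G (a ` {1..n}) = carrier G"
    and central: "\<forall>g\<in>carrier G. gprod G a n \<otimes>\<^bsub>G\<^esub> g = g \<otimes>\<^bsub>G\<^esub> gprod G a n"
    and S_sub: "\<forall>i\<in>{1..m}. S i \<subseteq> {1..n}"
    and S_int: "\<forall>i\<in>{1..m}. \<forall>r\<in>{1..m}. i \<noteq> r \<longrightarrow> card (S i \<inter> S r) \<le> 1"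
    and S_ne: "\<forall>i\<in>{1..m}. S i \<noteq> {}"
    and free: "\<forall>i\<in>{1..m}. \<forall>j0\<in>S i.
                 free_basis (barGS G a n (S i)) (bar_aS G a n (S i)) (S i - {j0})"
  shows "(\<lambda>g. \<lambda>i\<in>{1..m}. kerS G a n (S i) #>\<^bsub>G\<^esub> g) ` carrier G
           \<lhd> product_group {1..m} (\<lambda>i. GS G a n (S i))"
  proof -
  interpret G: group G by (rule grp)
  define I where "I = {1..m}"
  define K where "K = (\<lambda>i. kerS G a n (S i))"
  define Q where "Q = (\<lambda>i. GS G a n (S i))"
  define \<pi> where "\<pi> = (\<lambda>i g. K i #>\<^bsub>G\<^esub> g)"
  define \<rho> where "\<rho> = (\<lambda>g. \<lambda>i\<in>I. \<pi> i g)"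
  define P where "P = product_group I Q"
  define Hh where "Hh = \<rho> ` carrier G"
  have Qdef: "Q i = G Mod K i" for i unfolding Q_def K_def GS_def by simp
  have aC: "k \<in> {1..n} \<Longrightarrow> a k \<in> carrier G" for k using a_carr by auto
  have Kn: "K i \<lhd> G" for i
    unfolding K_def kerS_def normal_closure_def
  proof (rule G.normal_generateI)
    show "(\<lambda>(g, x). g \<otimes>\<^bsub>G\<^esub> x \<otimes>\<^bsub>G\<^esub> inv\<^bsub>G\<^esub> g) ` (carrier G \<times> a ` ({1..n} - S i)) \<subseteq> carrier G"
      using aC by auto
  next
    fix h g
    assume h: "h \<in> (\<lambda>(g, x). g \<otimes>\<^bsub>G\<^esub> x \<otimes>\<^bsub>G\<^esub> inv\<^bsub>G\<^esub> g) ` (carrier G \<times> a ` ({1..n} - S i))"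
      and g: "g \<in> carrier G"
    then obtain g0 k where g0: "g0 \<in> carrier G" and k: "k \<in> {1..n} - S i" and hh: "h = g0 \<otimes>\<^bsub>G\<^esub> a k \<otimes>\<^bsub>G\<^esub> inv\<^bsub>G\<^esub> g0"
      by auto
    have ak: "a k \<in> carrier G" using aC k by auto
    have "g \<otimes>\<^bsub>G\<^esub> h \<otimes>\<^bsub>G\<^esub> inv\<^bsub>G\<^esub> g = (g \<otimes>\<^bsub>G\<^esub> g0) \<otimes>\<^bsub>G\<^esub> a k \<otimes>\<^bsub>G\<^esub> inv\<^bsub>G\<^esub> (g \<otimes>\<^bsub>G\<^esub> g0)"
      using g g0 ak hh by (simp add: G.inv_mult_group G.m_assoc)
    then show "g \<otimes>\<^bsub>G\<^esub> h \<otimes>\<^bsub>G\<^esub> inv\<^bsub>G\<^esub> g \<in> (\<lambda>(g, x). g \<otimes>\<^bsub>G\<^esub> x \<otimes>\<^bsub>G\<^esub> inv\<^bsub>G\<^esub> g) ` (carrier G \<times> a ` ({1..n} - S i))"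
      using g g0 k by (auto intro!: image_eqI[where x="(g \<otimes>\<^bsub>G\<^esub> g0, a k)"])
  qed
  have QG: "group (Q i)" for i unfolding Qdef using normal.factorgroup_is_group[OF Kn] .
  have \<pi>hom: "\<pi> i \<in> hom G (Q i)" for i unfolding Qdef \<pi>_def using normal.r_coset_hom_Mod[OF Kn] .
  have \<pi>gh: "group_hom G (Q i) (\<pi> i)" for i
    using \<pi>hom QG grp unfolding group_hom_def group_hom_axioms_def by blast
  have \<pi>C: "g \<in> carrier G \<Longrightarrow> \<pi> i g \<in> carrier (Q i)" for i g using \<pi>hom by (auto simp: hom_def)
  have \<pi>mult: "g \<in> carrier G \<Longrightarrow> h \<in> carrier G \<Longrightarrow> \<pi> i (g \<otimes>\<^bsub>G\<^esub> h) = \<pi> i g \<otimes>\<^bsub>Q i\<^esub> \<pi> i h" for i g h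
    using \<pi>hom by (auto simp: hom_def)
  have \<pi>inv: "g \<in> carrier G \<Longrightarrow> \<pi> i (inv\<^bsub>G\<^esub> g) = inv\<^bsub>Q i\<^esub> \<pi> i g" for i g
    using group_hom.hom_inv[OF \<pi>gh] by blast
  have Qcar: "carrier (Q i) = \<pi> i ` carrier G" for i
    unfolding Qdef \<pi>_def by (simp add: carrier_FactGroup)
  have PG: "group P" unfolding P_def using QG by simp
  have \<rho>C: "g \<in> carrier G \<Longrightarrow> \<rho> g \<in> carrier P" for g
    unfolding P_def \<rho>_def using \<pi>C by auto
  have \<rho>hom: "\<rho> \<in> hom G P"
  proof (rule homI)
    show "\<rho> x \<in> carrier P" if "x \<in> carrier G" for x using \<rho>C that .
    show "\<rho> (x \<otimes>\<^bsub>G\<^esub> y) = \<rho> x \<otimes>\<^bsub>P\<^esub> \<rho> y" if "x \<in> carrier G" "y \<in> carrier G" for x y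
      unfolding P_def \<rho>_def using that \<pi>mult by (auto intro!: restrict_ext)
  qed
  have Hsub: "subgroup Hh P"
    unfolding Hh_def
    using group_hom.img_is_subgroup[of G P \<rho>] \<rho>hom PG grp
    unfolding group_hom_def group_hom_axioms_def by blast
  define e where "e = (\<lambda>i u. \<lambda>r\<in>I. if r = i then u else \<one>\<^bsub>Q r\<^esub>)"
  define eC where "eC = (\<lambda>i. {u \<in> carrier (Q i). e i u \<in> Hh})"
  have eCar: "i \<in> I \<Longrightarrow> u \<in> carrier (Q i) \<Longrightarrow> e i u \<in> carrier P" for i u
    unfolding e_def P_def using QG group.is_monoid monoid.one_closed by fastforce
  have e_one: "e i \<one>\<^bsub>Q i\<^esub> = \<one>\<^bsub>P\<^esub>" for i
    unfolding e_def P_def by (simp add: restrict_def fun_eq_iff)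
  have e_mult: "i \<in> I \<Longrightarrow> u \<in> carrier (Q i) \<Longrightarrow> v \<in> carrier (Q i) \<Longrightarrow>
      e i (u \<otimes>\<^bsub>Q i\<^esub> v) = e i u \<otimes>\<^bsub>P\<^esub> e i v" for i u v
    unfolding e_def P_def using QG
    by (auto intro!: restrict_ext simp: monoid.l_one[OF group.is_monoid] monoid.one_closed[OF group.is_monoid])
  have e_inv: "i \<in> I \<Longrightarrow> u \<in> carrier (Q i) \<Longrightarrow> e i (inv\<^bsub>Q i\<^esub> u) = inv\<^bsub>P\<^esub> (e i u)" for i u
  proof -
    assume i: "i \<in> I" and u: "u \<in> carrier (Q i)"
    have "inv\<^bsub>P\<^esub> (e i u) = (\<lambda>r\<in>I. inv\<^bsub>Q r\<^esub> (e i u r))"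
      unfolding P_def using inv_product_group[of "e i u" I Q] eCar[OF i u] QG unfolding P_def by simp
    then show ?thesis unfolding e_def using QG
      by (auto intro!: restrict_ext simp: monoid.inv_one[OF group.is_monoid])
  qed
  have eCsub: "subgroup (eC i) (Q i)" if i: "i \<in> I" for i
  proof (rule group.subgroupI[OF QG])
    show "eC i \<subseteq> carrier (Q i)" unfolding eC_def by auto
    have "\<one>\<^bsub>Q i\<^esub> \<in> eC i" unfolding eC_def
      using e_one subgroup.one_closed[OF Hsub] QG group.is_monoid monoid.one_closed by fastforce
    then show "eC i \<noteq> {}" by blast
    show "inv\<^bsub>Q i\<^esub> u \<in> eC i" if "u \<in> eC i" for u
      using that e_inv[OF i] subgroup.m_inv_closed[OF Hsub] group.inv_closed[OF QG]
      unfolding eC_def by auto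
    show "u \<otimes>\<^bsub>Q i\<^esub> v \<in> eC i" if "u \<in> eC i" "v \<in> eC i" for u v
      using that e_mult[OF i] subgroup.m_closed[OF Hsub] monoid.m_closed[OF group.is_monoid[OF QG]]
      unfolding eC_def by auto
  qed
  have eCconj: "x \<otimes>\<^bsub>Q i\<^esub> u \<otimes>\<^bsub>Q i\<^esub> inv\<^bsub>Q i\<^esub> x \<in> eC i"
    if i: "i \<in> I" and x: "x \<in> carrier (Q i)" and u: "u \<in> eC i" for i x u
  proof -
    obtain g where g: "g \<in> carrier G" and xg: "x = \<pi> i g" using x Qcar by auto
    have uC: "u \<in> carrier (Q i)" and uH: "e i u \<in> Hh" using u unfolding eC_def by auto
    have "\<rho> g \<in> Hh" unfolding Hh_def using g by blast
    then have inH: "\<rho> g \<otimes>\<^bsub>P\<^esub> e i u \<otimes>\<^bsub>P\<^esub> inv\<^bsub>P\<^esub> (\<rho> g) \<in> Hh"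
      using uH subgroup.m_closed[OF Hsub] subgroup.m_inv_closed[OF Hsub] by blast
    have invr: "inv\<^bsub>P\<^esub> (\<rho> g) = (\<lambda>r\<in>I. inv\<^bsub>Q r\<^esub> (\<pi> r g))"
      using inv_product_group[of "\<rho> g" I Q] \<rho>C[OF g] QG unfolding P_def \<rho>_def
      by (simp add: restrict_def fun_eq_iff)
    have "e i (x \<otimes>\<^bsub>Q i\<^esub> u \<otimes>\<^bsub>Q i\<^esub> inv\<^bsub>Q i\<^esub> x) = \<rho> g \<otimes>\<^bsub>P\<^esub> e i u \<otimes>\<^bsub>P\<^esub> inv\<^bsub>P\<^esub> (\<rho> g)"
      unfolding invr unfolding P_def e_def \<rho>_def xg
      using QG \<pi>C[OF g]
      by (auto intro!: restrict_ext simp: monoid.r_one[OF group.is_monoid] group.r_inv)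
    moreover have "x \<otimes>\<^bsub>Q i\<^esub> u \<otimes>\<^bsub>Q i\<^esub> inv\<^bsub>Q i\<^esub> x \<in> carrier (Q i)"
      using x uC QG by (simp add: group.inv_closed monoid.m_closed[OF group.is_monoid])
    ultimately show ?thesis using inH unfolding eC_def by simp
  qed
  have triv: "k \<in> {1..n} \<Longrightarrow> k \<notin> S r \<Longrightarrow> \<pi> r (a k) = \<one>\<^bsub>Q r\<^esub>" for k r
  proof -
    assume k: "k \<in> {1..n}" and kS: "k \<notin> S r"
    have ak: "a k \<in> carrier G" using aC k .
    have "(\<one>\<^bsub>G\<^esub>, a k) \<in> carrier G \<times> a ` ({1..n} - S r)" using k kS by auto
    then have "(\<lambda>(g, x). g \<otimes>\<^bsub>G\<^esub> x \<otimes>\<^bsub>G\<^esub> inv\<^bsub>G\<^esub> g) (\<one>\<^bsub>G\<^esub>, a k) \<in> (\<lambda>(g, x). g \<otimes>\<^bsub>G\<^esub> x \<otimes>\<^bsub>G\<^esub> inv\<^bsub>G\<^esub> g) ` (carrier G \<times> a ` ({1..n} - S r))"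
      by (rule imageI)
    then have "a k \<in> (\<lambda>(g, x). g \<otimes>\<^bsub>G\<^esub> x \<otimes>\<^bsub>G\<^esub> inv\<^bsub>G\<^esub> g) ` (carrier G \<times> a ` ({1..n} - S r))"
      using ak by simp
    then have "a k \<in> K r" unfolding K_def kerS_def normal_closure_def by (rule generate.incl)
    then have "K r #>\<^bsub>G\<^esub> a k = K r"
      using G.coset_join2[OF ak normal_imp_subgroup[OF Kn]] by blast
    then show ?thesis unfolding \<pi>_def Qdef by simp
  qed
  have commone: "x = \<one>\<^bsub>Q i\<^esub> \<or> y = \<one>\<^bsub>Q i\<^esub> \<or> x = y \<Longrightarrow> x \<in> carrier (Q i) \<Longrightarrow> y \<in> carrier (Q i) \<Longrightarrow>
      x \<otimes>\<^bsub>Q i\<^esub> y \<otimes>\<^bsub>Q i\<^esub> inv\<^bsub>Q i\<^esub> x \<otimes>\<^bsub>Q i\<^esub> inv\<^bsub>Q i\<^esub> y = \<one>\<^bsub>Q i\<^esub>" for i x y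
  proof -
    assume h: "x = \<one>\<^bsub>Q i\<^esub> \<or> y = \<one>\<^bsub>Q i\<^esub> \<or> x = y" "x \<in> carrier (Q i)" "y \<in> carrier (Q i)"
    interpret Qi: group "Q i" by (rule QG)
    show ?thesis using h by (auto simp: Qi.m_assoc)
  qed
  have base: "\<pi> i (a k) \<otimes>\<^bsub>Q i\<^esub> \<pi> i (a l) \<otimes>\<^bsub>Q i\<^esub> inv\<^bsub>Q i\<^esub> \<pi> i (a k) \<otimes>\<^bsub>Q i\<^esub> inv\<^bsub>Q i\<^esub> \<pi> i (a l) \<in> eC i"
    if i: "i \<in> I" and k: "k \<in> {1..n}" and l: "l \<in> {1..n}" for i k l
  proof (cases "k \<in> S i \<and> l \<in> S i \<and> k \<noteq> l")
    case False
    then have "k \<notin> S i \<or> l \<notin> S i \<or> k = l" by blast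
    then have "\<pi> i (a k) = \<one>\<^bsub>Q i\<^esub> \<or> \<pi> i (a l) = \<one>\<^bsub>Q i\<^esub> \<or> \<pi> i (a k) = \<pi> i (a l)"
      using triv[OF k, of i] triv[OF l, of i] by auto
    then have "\<pi> i (a k) \<otimes>\<^bsub>Q i\<^esub> \<pi> i (a l) \<otimes>\<^bsub>Q i\<^esub> inv\<^bsub>Q i\<^esub> \<pi> i (a k) \<otimes>\<^bsub>Q i\<^esub> inv\<^bsub>Q i\<^esub> \<pi> i (a l) = \<one>\<^bsub>Q i\<^esub>"
      by (rule commone[OF _ \<pi>C[OF aC[OF k]] \<pi>C[OF aC[OF l]]])
    then show ?thesis using subgroup.one_closed[OF eCsub[OF i]] by simp
  next
    case True
    define w where "w = a k \<otimes>\<^bsub>G\<^esub> a l \<otimes>\<^bsub>G\<^esub> inv\<^bsub>G\<^esub> a k \<otimes>\<^bsub>G\<^esub> inv\<^bsub>G\<^esub> a l"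
    have akl: "a k \<in> carrier G" "a l \<in> carrier G" using aC k l by auto
    have wC: "w \<in> carrier G" unfolding w_def using akl by simp
    have \<pi>w: "\<pi> r w = \<pi> r (a k) \<otimes>\<^bsub>Q r\<^esub> \<pi> r (a l) \<otimes>\<^bsub>Q r\<^esub> inv\<^bsub>Q r\<^esub> \<pi> r (a k) \<otimes>\<^bsub>Q r\<^esub> inv\<^bsub>Q r\<^esub> \<pi> r (a l)" for r
      unfolding w_def using akl by (simp add: \<pi>mult \<pi>inv)
    have other: "\<pi> r w = \<one>\<^bsub>Q r\<^esub>" if r: "r \<in> I" "r \<noteq> i" for r
    proof -
      have "\<not> (k \<in> S r \<and> l \<in> S r)"
      proof
        assume "k \<in> S r \<and> l \<in> S r"
        then have sub: "{k, l} \<subseteq> S i \<inter> S r" using True by auto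
        have "S i \<subseteq> {1..n}" using S_sub i unfolding I_def by blast
        then have "finite (S i)" using finite_subset by blast
        then have "finite (S i \<inter> S r)" by simp
        then have "card {k, l} \<le> card (S i \<inter> S r)" using sub card_mono by blast
        moreover have "card {k,l} = 2" using True by simp
        moreover have "card (S i \<inter> S r) \<le> 1" using S_int i r unfolding I_def by (metis r(2))
        ultimately show False by simp
      qed
      then have "k \<notin> S r \<or> l \<notin> S r" by blast
      then have "\<pi> r (a k) = \<one>\<^bsub>Q r\<^esub> \<or> \<pi> r (a l) = \<one>\<^bsub>Q r\<^esub>" using triv[OF k, of r] triv[OF l, of r] by auto
      then show ?thesis unfolding \<pi>w by (intro commone[OF _ \<pi>C[OF akl(1)] \<pi>C[OF akl(2)]]) blast
    qed
    have "e i (\<pi> i w) = \<rho> w"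
      unfolding e_def \<rho>_def by (rule restrict_ext) (use other in auto)
    moreover have "\<rho> w \<in> Hh" unfolding Hh_def using wC by blast
    ultimately have "\<pi> i w \<in> eC i" unfolding eC_def using \<pi>C[OF wC] by simp
    then show ?thesis unfolding \<pi>w .
  qed
  have gens: "generate (Q i) (\<pi> i ` a ` {1..n}) = carrier (Q i)" for i
    using group_hom.generate_img[OF \<pi>gh a_carr] gen Qcar by simp
  have allcomm: "u \<otimes>\<^bsub>Q i\<^esub> v \<otimes>\<^bsub>Q i\<^esub> inv\<^bsub>Q i\<^esub> u \<otimes>\<^bsub>Q i\<^esub> inv\<^bsub>Q i\<^esub> v \<in> eC i"
    if i: "i \<in> I" and u: "u \<in> carrier (Q i)" and v: "v \<in> carrier (Q i)" for i u v
  proof (rule group.comm_B[OF QG eCsub[OF i] _ _ gens _ u v])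
    show "\<And>g c. g \<in> carrier (Q i) \<Longrightarrow> c \<in> eC i \<Longrightarrow> g \<otimes>\<^bsub>Q i\<^esub> c \<otimes>\<^bsub>Q i\<^esub> inv\<^bsub>Q i\<^esub> g \<in> eC i"
      using eCconj[OF i] by blast
    show "\<pi> i ` a ` {1..n} \<subseteq> carrier (Q i)" using \<pi>C aC by auto
    show "\<And>x y. x \<in> \<pi> i ` a ` {1..n} \<Longrightarrow> y \<in> \<pi> i ` a ` {1..n} \<Longrightarrow>
         x \<otimes>\<^bsub>Q i\<^esub> y \<otimes>\<^bsub>Q i\<^esub> inv\<^bsub>Q i\<^esub> x \<otimes>\<^bsub>Q i\<^esub> inv\<^bsub>Q i\<^esub> y \<in> eC i"
      using base[OF i] by blast
  qed
  have "Hh \<lhd> P"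
  proof (rule group.normal_invI[OF PG Hsub])
    fix x h assume x: "x \<in> carrier P" and h: "h \<in> Hh"
    obtain g where g: "g \<in> carrier G" and hg: "h = \<rho> g" using h unfolding Hh_def by blast
    have xi: "i \<in> I \<Longrightarrow> x i \<in> carrier (Q i)" for i using x unfolding P_def by auto
    have xe: "x \<in> extensional I" using x unfolding P_def by (simp add: PiE_iff)
    define c where "c = (\<lambda>i\<in>I. x i \<otimes>\<^bsub>Q i\<^esub> \<pi> i g \<otimes>\<^bsub>Q i\<^esub> inv\<^bsub>Q i\<^esub> x i \<otimes>\<^bsub>Q i\<^esub> inv\<^bsub>Q i\<^esub> \<pi> i g)"
    have ci: "i \<in> I \<Longrightarrow> c i \<in> eC i" for i
      unfolding c_def using allcomm xi \<pi>C[OF g] by simp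
    have cC: "c \<in> (\<Pi>\<^sub>E i\<in>I. carrier (Q i))"
      using ci unfolding eC_def c_def by auto
    have cH: "c \<in> Hh"
    proof (rule prod_subgroup_lemma[of I Q Hh c])
      show "\<And>i. i \<in> I \<Longrightarrow> group (Q i)" using QG by blast
      show "finite I" unfolding I_def by simp
      show "subgroup Hh (product_group I Q)" using Hsub unfolding P_def .
      show "c \<in> (\<Pi>\<^sub>E i\<in>I. carrier (Q i))" using cC .
      show "(\<lambda>r\<in>I. if r = i then c i else \<one>\<^bsub>Q r\<^esub>) \<in> Hh" if "i \<in> I" for i
        using ci[OF that] unfolding eC_def e_def by simp
    qed
    have invx: "inv\<^bsub>P\<^esub> x = (\<lambda>i\<in>I. inv\<^bsub>Q i\<^esub> x i)"
      using inv_product_group[of x I Q] x QG unfolding P_def by simp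
    have eq: "x \<otimes>\<^bsub>P\<^esub> h \<otimes>\<^bsub>P\<^esub> inv\<^bsub>P\<^esub> x = c \<otimes>\<^bsub>P\<^esub> h"
      unfolding invx hg
      unfolding P_def c_def \<rho>_def mult_product_group
    proof (rule restrict_ext)
      fix i assume i: "i \<in> I"
      show "(\<lambda>i\<in>I. x i \<otimes>\<^bsub>Q i\<^esub> (\<lambda>i\<in>I. \<pi> i g) i) i \<otimes>\<^bsub>Q i\<^esub> (\<lambda>i\<in>I. inv\<^bsub>Q i\<^esub> x i) i =
         (\<lambda>i\<in>I. x i \<otimes>\<^bsub>Q i\<^esub> \<pi> i g \<otimes>\<^bsub>Q i\<^esub> inv\<^bsub>Q i\<^esub> x i \<otimes>\<^bsub>Q i\<^esub> inv\<^bsub>Q i\<^esub> \<pi> i g) i \<otimes>\<^bsub>Q i\<^esub> (\<lambda>i\<in>I. \<pi> i g) i"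
        using i group.conj_as_comm[OF QG xi[OF i] \<pi>C[OF g]] by simp
    qed
    show "x \<otimes>\<^bsub>P\<^esub> h \<otimes>\<^bsub>P\<^esub> inv\<^bsub>P\<^esub> x \<in> Hh"
      unfolding eq using subgroup.m_closed[OF Hsub cH h] .
  qed
  then show ?thesis unfolding Hh_def \<rho>_def \<pi>_def P_def I_def K_def Q_def .
qed

end
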